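(* Let $E$ be a finite set and let $\omega:2^E\to[0,\infty)$ be Rayleigh. Then $\omega$ is logarithmically submodular: for all $S,T\subseteq E$, $\omega(S)\omega(T)\ge\omega(S\cap T)\,\omega(S\cup T)$.
   Context: For $\omega:2^E\to[0,\infty)$ not identically zero, let $Z(\omega;\mathbf{y})=\sum_{S\subseteq E}\omega(S)\prod_{e\in S}y_e$ in commuting indeterminates $\mathbf{y}=\{y_e:e\in E\}$. Write $Z_e=\partial Z/\partial y_e$, $Z_{ef}=\partial^2Z/\partial y_e\partial y_f$ and $\Delta Z\{e,f\}=Z_eZ_f-Z_{ef}Z$. $\omega$ is Rayleigh if $\Delta Z\{e,f\}(\mathbf{y})\ge0$ for all distinct $e,f\in E$ and all $\mathbf{y}$ with all $y_c>0$. *)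

theory Defs
  imports "HOL-Analysis.Analysis"
begin

definition genpoly :: "'a set \<Rightarrow> ('a set \<Rightarrow> real) \<Rightarrow> ('a \<Rightarrow> real) \<Rightarrow> real" where
  "genpoly E \<omega> y = (\<Sum>S\<in>Pow E. \<omega> S * (\<Prod>e\<in>S. y e))"

definition pderiv_var :: "'a \<Rightarrow> (('a \<Rightarrow> real) \<Rightarrow> real) \<Rightarrow> ('a \<Rightarrow> real) \<Rightarrow> real" where
  "pderiv_var e F y = deriv (\<lambda>t. F (y(e := t))) (y e)"

definition rayleigh_diff :: "'a set \<Rightarrow> ('a set \<Rightarrow> real) \<Rightarrow> 'a \<Rightarrow> 'a \<Rightarrow> ('a \<Rightarrow> real) \<Rightarrow> real" where
  "rayleigh_diff E \<omega> e f y =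
     pderiv_var e (genpoly E \<omega>) y * pderiv_var f (genpoly E \<omega>) y
     - pderiv_var e (pderiv_var f (genpoly E \<omega>)) y * genpoly E \<omega> y"

definition rayleigh :: "'a set \<Rightarrow> ('a set \<Rightarrow> real) \<Rightarrow> bool" where
  "rayleigh E \<omega> \<longleftrightarrow>
     (\<forall>e\<in>E. \<forall>f\<in>E. e \<noteq> f \<longrightarrow>
        (\<forall>y. (\<forall>c\<in>E. y c > 0) \<longrightarrow> rayleigh_diff E \<omega> e f y \<ge> 0))"

end

theory Submission
  imports Defs
begin

definition del_op :: "'a \<Rightarrow> ('a set \<Rightarrow> real) \<Rightarrow> 'a set \<Rightarrow> real" where
  "del_op e \<nu> = (\<lambda>R. if e \<in> R then 0 else \<nu> R)"

definition shift_op :: "'a \<Rightarrow> ('a set \<Rightarrow> real) \<Rightarrow> 'a set \<Rightarrow> real" where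
  "shift_op e \<nu> = (\<lambda>R. if e \<in> R then 0 else \<nu> (insert e R))"

lemma sum_Pow_split:
  assumes "finite E" "e \<in> E"
  shows "(\<Sum>R\<in>Pow E. h R) = (\<Sum>R\<in>Pow (E-{e}). h R) + (\<Sum>R\<in>Pow (E-{e}). h (insert e R))"
proof -
  have P: "Pow E = Pow (E-{e}) \<union> insert e ` Pow (E-{e})"
    using Pow_insert[of e "E-{e}"] assms(2) by (simp add: insert_absorb)
  have inj: "inj_on (insert e) (Pow (E-{e}))"
    unfolding inj_on_def by blast
  have disj: "Pow (E-{e}) \<inter> insert e ` Pow (E-{e}) = {}" by blast
  have "(\<Sum>R\<in>Pow E. h R) = (\<Sum>R\<in>Pow (E-{e}). h R) + (\<Sum>R\<in>insert e ` Pow (E-{e}). h R)"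
    unfolding P using assms(1) disj by (intro sum.union_disjoint) auto
  also have "(\<Sum>R\<in>insert e ` Pow (E-{e}). h R) = (\<Sum>R\<in>Pow (E-{e}). h (insert e R))"
    using sum.reindex[OF inj] by simp
  finally show ?thesis .
qed

lemma genpoly_split:
  assumes "finite E" "e \<in> E"
  shows "genpoly E \<nu> (y(e:=t)) = genpoly E (del_op e \<nu>) y + t * genpoly E (shift_op e \<nu>) y"
proof -
  have fin: "\<And>R. R \<in> Pow (E-{e}) \<Longrightarrow> finite R" using assms(1) finite_subset by auto
  have p1: "\<And>R. R \<in> Pow (E-{e}) \<Longrightarrow> (\<Prod>c\<in>R. (y(e:=t)) c) = (\<Prod>c\<in>R. y c)"
    by (rule prod.cong) auto
  have p2: "\<And>R. R \<in> Pow (E-{e}) \<Longrightarrow> (\<Prod>c\<in>insert e R. (y(e:=t)) c) = t * (\<Prod>c\<in>R. y c)"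
    using p1 fin by (subst prod.insert) auto
  have "genpoly E \<nu> (y(e:=t)) = (\<Sum>R\<in>Pow (E-{e}). \<nu> R * (\<Prod>c\<in>R. y c))
      + (\<Sum>R\<in>Pow (E-{e}). t * (\<nu> (insert e R) * (\<Prod>c\<in>R. y c)))"
    unfolding genpoly_def sum_Pow_split[OF assms]
  proof (intro arg_cong2[where f="(+)"] sum.cong refl)
    fix R assume "R \<in> Pow (E-{e})"
    then show "\<nu> R * (\<Prod>c\<in>R. (y(e:=t)) c) = \<nu> R * (\<Prod>c\<in>R. y c)" using p1 by simp
  next
    fix R assume "R \<in> Pow (E-{e})"
    then show "\<nu> (insert e R) * (\<Prod>c\<in>insert e R. (y(e:=t)) c) = t * (\<nu> (insert e R) * (\<Prod>c\<in>R. y c))"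
      using p2 by simp
  qed
  moreover have "genpoly E (del_op e \<nu>) y = (\<Sum>R\<in>Pow (E-{e}). \<nu> R * (\<Prod>c\<in>R. y c))"
    unfolding genpoly_def del_op_def sum_Pow_split[OF assms] by (auto intro!: sum.cong)
  moreover have "genpoly E (shift_op e \<nu>) y = (\<Sum>R\<in>Pow (E-{e}). \<nu> (insert e R) * (\<Prod>c\<in>R. y c))"
    unfolding genpoly_def shift_op_def sum_Pow_split[OF assms] by (auto intro!: sum.cong)
  ultimately show ?thesis by (simp add: sum_distrib_left)
qed


lemma genpoly_two:
  assumes "finite E" "e \<in> E" "f \<in> E"
  shows "genpoly E \<omega> (y(e:=s, f:=t)) =
     genpoly E (del_op e (del_op f \<omega>)) y + genpoly E (shift_op e (del_op f \<omega>)) y * s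
     + genpoly E (del_op e (shift_op f \<omega>)) y * t + genpoly E (shift_op e (shift_op f \<omega>)) y * s * t"
  using genpoly_split[OF assms(1,3), of \<omega> "y(e:=s)" t]
    genpoly_split[OF assms(1,2), of "del_op f \<omega>" y s]
    genpoly_split[OF assms(1,2), of "shift_op f \<omega>" y s]
  by (simp add: algebra_simps)

lemma rayleigh_pair:
  assumes fin: "finite E" and e: "e \<in> E" and f: "f \<in> E" and ef: "e \<noteq> f"
    and ray: "rayleigh E \<omega>" and ypos: "\<forall>c\<in>E. y c > 0"
    and s0: "0 < s0" "s0 \<le> s1" and t0: "0 < t0" "t0 \<le> t1"
  shows "genpoly E \<omega> (y(e:=s0, f:=t0)) * genpoly E \<omega> (y(e:=s1, f:=t1))
     \<le> genpoly E \<omega> (y(e:=s1, f:=t0)) * genpoly E \<omega> (y(e:=s0, f:=t1))"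
proof -
  define a where "a = genpoly E (del_op e (del_op f \<omega>)) y"
  define b where "b = genpoly E (shift_op e (del_op f \<omega>)) y"
  define c where "c = genpoly E (del_op e (shift_op f \<omega>)) y"
  define d where "d = genpoly E (shift_op e (shift_op f \<omega>)) y"
  have Z: "\<And>s t. genpoly E \<omega> (y(e:=s, f:=t)) = a + b * s + c * t + d * s * t"
    unfolding a_def b_def c_def d_def by (rule genpoly_two[OF fin e f])
  have upd1: "\<And>s t t'. (y(e:=s, f:=t))(e:=t') = y(e:=t', f:=t)"
    using ef by (simp add: fun_upd_twist)
  have upd2: "\<And>s t t'. (y(e:=s, f:=t))(f:=t') = y(e:=s, f:=t')"
    by simp
  have De: "\<And>s t. pderiv_var e (genpoly E \<omega>) (y(e:=s, f:=t)) = b + d * t"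
  proof -
    fix s t
    have "((\<lambda>t'. a + b * t' + c * t + d * t' * t) has_real_derivative (b + d * t)) (at s)"
      by (auto intro!: derivative_eq_intros)
    then show "pderiv_var e (genpoly E \<omega>) (y(e:=s, f:=t)) = b + d * t"
      unfolding pderiv_var_def upd1 Z using ef by (simp add: DERIV_imp_deriv)
  qed
  have Df: "\<And>s t. pderiv_var f (genpoly E \<omega>) (y(e:=s, f:=t)) = c + d * s"
  proof -
    fix s t
    have "((\<lambda>t'. a + b * s + c * t' + d * s * t') has_real_derivative (c + d * s)) (at t)"
      by (auto intro!: derivative_eq_intros)
    then show "pderiv_var f (genpoly E \<omega>) (y(e:=s, f:=t)) = c + d * s"
      unfolding pderiv_var_def upd2 Z by (simp add: DERIV_imp_deriv)
  qed
  have Def: "\<And>s t. pderiv_var e (pderiv_var f (genpoly E \<omega>)) (y(e:=s, f:=t)) = d"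
  proof -
    fix s t
    have "((\<lambda>t'. c + d * t') has_real_derivative d) (at s)"
      by (auto intro!: derivative_eq_intros)
    then show "pderiv_var e (pderiv_var f (genpoly E \<omega>)) (y(e:=s, f:=t)) = d"
      unfolding pderiv_var_def[of e] upd1 Df using ef by (simp add: DERIV_imp_deriv)
  qed
  have pos: "\<forall>c'\<in>E. (y(e:=s0, f:=t0)) c' > 0" using ypos s0 t0 by auto
  have "rayleigh_diff E \<omega> e f (y(e:=s0, f:=t0)) \<ge> 0"
    using ray e f ef pos unfolding rayleigh_def by blast
  then have "(b + d * t0) * (c + d * s0) - d * (a + b * s0 + c * t0 + d * s0 * t0) \<ge> 0"
    unfolding rayleigh_diff_def De Df Def Z .
  then have key: "b * c - a * d \<ge> 0" by (simp add: algebra_simps)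
  have "(a + b * s1 + c * t0 + d * s1 * t0) * (a + b * s0 + c * t1 + d * s0 * t1)
      - (a + b * s0 + c * t0 + d * s0 * t0) * (a + b * s1 + c * t1 + d * s1 * t1)
      = (s1 - s0) * (t1 - t0) * (b * c - a * d)"
    by (simp add: algebra_simps)
  moreover have "(s1 - s0) * (t1 - t0) * (b * c - a * d) \<ge> 0"
    using s0 t0 key by simp
  ultimately show ?thesis unfolding Z by linarith
qed


definition pt :: "real \<Rightarrow> 'a set \<Rightarrow> 'a \<Rightarrow> real" where
  "pt l W c = (if c \<in> W then l else 1 / l)"

lemma genpoly_pos:
  assumes fin: "finite E" and nn: "\<And>S. S \<subseteq> E \<Longrightarrow> \<omega> S \<ge> 0"
    and nz: "\<exists>S\<subseteq>E. \<omega> S \<noteq> 0" and ypos: "\<forall>c\<in>E. y c > 0"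
  shows "genpoly E \<omega> y > 0"
proof -
  obtain S where S: "S \<subseteq> E" "\<omega> S \<noteq> 0" using nz by blast
  have pp: "\<And>R. R \<subseteq> E \<Longrightarrow> (\<Prod>c\<in>R. y c) > 0"
    using ypos by (intro prod_pos) auto
  have "\<omega> S * (\<Prod>c\<in>S. y c) > 0" using S nn[of S] pp[of S] by simp
  also have "\<omega> S * (\<Prod>c\<in>S. y c) \<le> genpoly E \<omega> y"
    unfolding genpoly_def
  proof (rule member_le_sum)
    show "S \<in> Pow E" using S by simp
    show "finite (Pow E)" using fin by simp
    fix R assume "R \<in> Pow E - {S}"
    then have R: "R \<subseteq> E" by simp
    show "0 \<le> \<omega> R * (\<Prod>c\<in>R. y c)" using nn[OF R] pp[OF R] by simp
  qed
  finally show ?thesis .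
qed

lemma submod_one:
  fixes L :: "'a set \<Rightarrow> real"
  assumes pair: "\<And>W e f. W \<subseteq> E \<Longrightarrow> e \<in> E \<Longrightarrow> f \<in> E \<Longrightarrow> e \<notin> W \<Longrightarrow> f \<notin> W \<Longrightarrow> e \<noteq> f \<Longrightarrow>
      L W + L (insert e (insert f W)) \<le> L (insert e W) + L (insert f W)"
  shows "finite B \<Longrightarrow> B \<subseteq> E \<Longrightarrow> W \<subseteq> E \<Longrightarrow> W \<inter> B = {} \<Longrightarrow> a \<in> E \<Longrightarrow> a \<notin> W \<Longrightarrow> a \<notin> B \<Longrightarrow>
     L W + L (insert a (W \<union> B)) \<le> L (insert a W) + L (W \<union> B)"
proof (induction B rule: finite_induct)
  case empty
  then show ?case by simp
next
  case (insert b B)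
  have IH: "L W + L (insert a (W \<union> B)) \<le> L (insert a W) + L (W \<union> B)"
    using insert by auto
  have P: "L (W \<union> B) + L (insert a (insert b (W \<union> B))) \<le> L (insert a (W \<union> B)) + L (insert b (W \<union> B))"
    using insert by (intro pair) auto
  show ?case using IH P by simp
qed

lemma submod_two:
  fixes L :: "'a set \<Rightarrow> real"
  assumes pair: "\<And>W e f. W \<subseteq> E \<Longrightarrow> e \<in> E \<Longrightarrow> f \<in> E \<Longrightarrow> e \<notin> W \<Longrightarrow> f \<notin> W \<Longrightarrow> e \<noteq> f \<Longrightarrow>
      L W + L (insert e (insert f W)) \<le> L (insert e W) + L (insert f W)"
    and B: "finite B" "B \<subseteq> E" and W: "W \<subseteq> E" "W \<inter> B = {}"
  shows "finite A \<Longrightarrow> A \<subseteq> E \<Longrightarrow> W \<inter> A = {} \<Longrightarrow> A \<inter> B = {} \<Longrightarrow>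
     L W + L (W \<union> A \<union> B) \<le> L (W \<union> A) + L (W \<union> B)"
proof (induction A rule: finite_induct)
  case empty
  then show ?case by simp
next
  case (insert a A)
  have IH: "L W + L (W \<union> A \<union> B) \<le> L (W \<union> A) + L (W \<union> B)"
    using insert by auto
  have P: "L (W \<union> A) + L (insert a ((W \<union> A) \<union> B)) \<le> L (insert a (W \<union> A)) + L ((W \<union> A) \<union> B)"
    using insert B W by (intro submod_one[OF pair]) auto
  show ?case using IH P by simp
qed

lemma genpoly_pt:
  assumes fin: "finite E" and W: "W \<subseteq> E" and l: "l > 0"
  shows "genpoly E \<omega> (pt l W) = l ^ card W * (\<Sum>R\<in>Pow E. \<omega> R * (1/l) ^ (card (W - R) + card (R - W)))"
proof -
  have "\<And>R. R \<subseteq> E \<Longrightarrow> \<omega> R * (\<Prod>c\<in>R. pt l W c) = l ^ card W * (\<omega> R * (1/l) ^ (card (W - R) + card (R - W)))"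
  proof -
    fix R assume R: "R \<subseteq> E"
    have fR: "finite R" using R fin finite_subset by blast
    have fW: "finite W" using W fin finite_subset by blast
    have "(\<Prod>c\<in>R. pt l W c) = l ^ card (R \<inter> W) * (1/l) ^ card (R - W)"
      unfolding pt_def using fR by (simp add: prod.If_cases Diff_eq)
    moreover have "card W = card (R \<inter> W) + card (W - R)"
      using card_Int_Diff[OF fW, of R] by (simp add: Int_commute)
    moreover have "l ^ card (W - R) * (1/l) ^ card (W - R) = 1"
      using l by (simp add: power_divide)
    ultimately show "\<omega> R * (\<Prod>c\<in>R. pt l W c) = l ^ card W * (\<omega> R * (1/l) ^ (card (W - R) + card (R - W)))"
      by (simp add: power_add algebra_simps)
  qed
  then show ?thesis unfolding genpoly_def sum_distrib_left by (intro sum.cong refl) auto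
qed

lemma g_limit:
  fixes \<omega> :: "'a set \<Rightarrow> real"
  assumes fin: "finite E" and W: "W \<subseteq> E"
  shows "((\<lambda>l. \<Sum>R\<in>Pow E. \<omega> R * (1/l) ^ (card (W - R) + card (R - W))) \<longlongrightarrow> \<omega> W) at_top"
proof -
  have inv: "((\<lambda>l::real. 1/l) \<longlongrightarrow> 0) at_top"
    by (rule tendsto_divide_0[OF tendsto_const filterlim_at_top_imp_at_infinity[OF filterlim_ident]])
  have "((\<lambda>l. \<Sum>R\<in>Pow E. \<omega> R * (1/l) ^ (card (W - R) + card (R - W))) \<longlongrightarrow>
      (\<Sum>R\<in>Pow E. \<omega> R * 0 ^ (card (W - R) + card (R - W)))) at_top"
    apply (rule tendsto_sum)
    apply (rule tendsto_mult_left)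
    apply (rule tendsto_power)
    apply (rule inv)
    done
  moreover have "(\<Sum>R\<in>Pow E. \<omega> R * (0::real) ^ (card (W - R) + card (R - W))) = (\<Sum>R\<in>Pow E. if R = W then \<omega> R else 0)"
  proof (rule sum.cong[OF refl])
    fix R assume R: "R \<in> Pow E"
    have "finite R" "finite W" using R W fin finite_subset by auto
    then have "(card (W - R) + card (R - W) = 0) = (R = W)" by auto
    then show "\<omega> R * (0::real) ^ (card (W - R) + card (R - W)) = (if R = W then \<omega> R else 0)"
      by (auto simp: power_0_left)
  qed
  moreover have "(\<Sum>R\<in>Pow E. if R = W then \<omega> R else 0) = \<omega> W"
    using W fin by (simp add: sum.delta)
  ultimately show ?thesis by simp
qed


theorem theorem4p4:
  fixes E :: "'a set" and \<omega> :: "'a set \<Rightarrow> real"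
  assumes "finite E"
    and "\<And>S. S \<subseteq> E \<Longrightarrow> \<omega> S \<ge> 0"
    and "\<exists>S\<subseteq>E. \<omega> S \<noteq> 0"
    and "rayleigh E \<omega>"
    and "S \<subseteq> E" and "T \<subseteq> E"
  shows "\<omega> S * \<omega> T \<ge> \<omega> (S \<inter> T) * \<omega> (S \<union> T)"
proof -
  note fin = assms(1) and nn = assms(2) and nz = assms(3) and ray = assms(4)
  define g where "g W l = (\<Sum>R\<in>Pow E. \<omega> R * (1/l) ^ (card (W - R) + card (R - W)))" for W l
  have fS: "finite S" and fT: "finite T" using assms(5,6) fin finite_subset by auto
  have main: "g (S \<inter> T) l * g (S \<union> T) l \<le> g S l * g T l" if l1: "l > 1" for l
  proof -
    have l0: "l > 0" using l1 by simp
    define L where "L X = ln (genpoly E \<omega> (pt l X))" for X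
    have ptpos: "\<forall>c\<in>E. pt l X c > 0" for X using l0 by (simp add: pt_def)
    have Zpos: "genpoly E \<omega> (pt l X) > 0" for X
      using genpoly_pos[OF fin nn nz ptpos] by blast
    have Znz: "genpoly E \<omega> (pt l X) \<noteq> 0" for X using Zpos[of X] by simp
    have pair: "L W + L (insert e (insert f W)) \<le> L (insert e W) + L (insert f W)"
      if W: "W \<subseteq> E" "e \<in> E" "f \<in> E" "e \<notin> W" "f \<notin> W" "e \<noteq> f" for W e f
    proof -
      have il: "1/l \<le> l" using l1 by (simp add: field_simps) (metis less_1_mult less_eq_real_def)
      have R: "genpoly E \<omega> ((pt l W)(e:=1/l, f:=1/l)) * genpoly E \<omega> ((pt l W)(e:=l, f:=l))
         \<le> genpoly E \<omega> ((pt l W)(e:=l, f:=1/l)) * genpoly E \<omega> ((pt l W)(e:=1/l, f:=l))"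
        using l0 il by (intro rayleigh_pair[OF fin W(2,3,6) ray ptpos]) auto
      have e1: "(pt l W)(e:=1/l, f:=1/l) = pt l W" using W by (auto simp: pt_def)
      have e2: "(pt l W)(e:=l, f:=l) = pt l (insert e (insert f W))" using W by (auto simp: pt_def)
      have e3: "(pt l W)(e:=l, f:=1/l) = pt l (insert e W)" using W by (auto simp: pt_def)
      have e4: "(pt l W)(e:=1/l, f:=l) = pt l (insert f W)" using W by (auto simp: pt_def)
      have "genpoly E \<omega> (pt l W) * genpoly E \<omega> (pt l (insert e (insert f W)))
         \<le> genpoly E \<omega> (pt l (insert e W)) * genpoly E \<omega> (pt l (insert f W))"
        using R unfolding e1 e2 e3 e4 .
      then have "ln (genpoly E \<omega> (pt l W) * genpoly E \<omega> (pt l (insert e (insert f W))))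
         \<le> ln (genpoly E \<omega> (pt l (insert e W)) * genpoly E \<omega> (pt l (insert f W)))"
        using Zpos by (subst ln_le_cancel_iff) (auto intro: mult_pos_pos)
      then show ?thesis unfolding L_def using Zpos by (simp add: ln_mult Znz)
    qed
    have sub: "L (S \<inter> T) + L ((S \<inter> T) \<union> (S - T) \<union> (T - S)) \<le> L ((S \<inter> T) \<union> (S - T)) + L ((S \<inter> T) \<union> (T - S))"
      using assms(5,6) fin fS fT by (intro submod_two[OF pair]) auto
    have s1: "(S \<inter> T) \<union> (S - T) \<union> (T - S) = S \<union> T" by blast
    have s2: "(S \<inter> T) \<union> (S - T) = S" by blast
    have s3: "(S \<inter> T) \<union> (T - S) = T" by blast
    have "L (S \<inter> T) + L (S \<union> T) \<le> L S + L T" using sub s1 s2 s3 by simp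
    then have "ln (genpoly E \<omega> (pt l (S \<inter> T)) * genpoly E \<omega> (pt l (S \<union> T)))
        \<le> ln (genpoly E \<omega> (pt l S) * genpoly E \<omega> (pt l T))"
      unfolding L_def using Zpos by (simp add: ln_mult Znz)
    then have Zi: "genpoly E \<omega> (pt l (S \<inter> T)) * genpoly E \<omega> (pt l (S \<union> T))
        \<le> genpoly E \<omega> (pt l S) * genpoly E \<omega> (pt l T)"
      using Zpos by (subst (asm) ln_le_cancel_iff) (auto intro: mult_pos_pos)
    have gp: "genpoly E \<omega> (pt l X) = l ^ card X * g X l" if "X \<subseteq> E" for X
      unfolding g_def using genpoly_pt[OF fin that l0] .
    have cards: "card (S \<inter> T) + card (S \<union> T) = card S + card T"
      using card_Un_Int[OF fS fT] by simp
    have "l ^ card S * l ^ card T * (g (S \<inter> T) l * g (S \<union> T) l) \<le> l ^ card S * l ^ card T * (g S l * g T l)"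
    proof -
      have "l ^ card S * l ^ card T = l ^ card (S \<inter> T) * l ^ card (S \<union> T)"
        using cards by (metis power_add)
      moreover have "l ^ card (S \<inter> T) * g (S \<inter> T) l * (l ^ card (S \<union> T) * g (S \<union> T) l)
          \<le> l ^ card S * g S l * (l ^ card T * g T l)"
        using Zi gp[of "S \<inter> T"] gp[of "S \<union> T"] gp[of S] gp[of T] assms(5,6)
        by (simp add: Int_absorb2 le_infI1)
      ultimately show ?thesis by (simp add: algebra_simps)
    qed
    moreover have "l ^ card S * l ^ card T > 0" using l0 by simp
    ultimately show ?thesis using mult_le_cancel_left_pos by blast
  qed
  have lim1: "((\<lambda>l. g (S \<inter> T) l * g (S \<union> T) l) \<longlongrightarrow> \<omega> (S \<inter> T) * \<omega> (S \<union> T)) at_top"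
    unfolding g_def using assms(5,6) by (intro tendsto_mult g_limit[OF fin]) auto
  have lim2: "((\<lambda>l. g S l * g T l) \<longlongrightarrow> \<omega> S * \<omega> T) at_top"
    unfolding g_def using assms(5,6) by (intro tendsto_mult g_limit[OF fin]) auto
  have ev: "eventually (\<lambda>l. g (S \<inter> T) l * g (S \<union> T) l \<le> g S l * g T l) at_top"
    using main eventually_at_top_dense by (metis (mono_tags, lifting) eventually_at_top_linorder less_le_trans zero_less_one one_less_numeral_iff semiring_norm(76) eventually_gt_at_top eventually_mono)
  show ?thesis using tendsto_le[OF trivial_limit_at_top_linorder lim2 lim1 ev] .
qed

end
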